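(* Let $1<\gamma\le 15/14$. Let $\mathrm{ALG}$ be a deterministic online list update algorithm with advice such that $\mathrm{ALG}(\sigma)\le\gamma\cdot\mathrm{OPT}(\sigma)$ for every request sequence $\sigma$ (full cost model). Then on inputs of size $n$ (already for a list of two items), $\mathrm{ALG}$ needs to read at least $$\frac{n}{5}\Bigl(1+(7\gamma-7)\log_2(7\gamma-7)+(8-7\gamma)\log_2(8-7\gamma)\Bigr)$$ bits of advice on some input.
   Context: Static list update problem: a list of $l$ distinct items in some initial order; a request sequence $\sigma$ of items is served online in order. Serving a request to the item at position $i$ (from the front) costs $i$ (full cost model). Immediately after an access, the accessed item may be moved closer to the front at no cost (free exchange); at any time two adjacent items may be swapped at cost $1$ (paid exchange). $A(\sigma)$ is the total cost of algorithm $A$ on $\sigma$ and $\mathrm{OPT}(\sigma)$ the minimum cost of any offline algorithm on $\sigma$ from the same initial list. Advice model: before serving, an oracle knowing all of $\sigma$ writes an infinite binary advice tape; the online algorithm may read tape bits at any time, and the number of advice bits read is the length of the shortest prefix of the tape containing all accessed bits. *)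

theory Defs
  imports Complex_Main
begin

(* Static list update, full cost model. Positions are 0-indexed internally;
   accessing the item at 0-indexed position i costs i+1. *)

fun index_of :: "'a \<Rightarrow> 'a list \<Rightarrow> nat" where
  "index_of x [] = 0"
| "index_of x (y # ys) = (if x = y then 0 else Suc (index_of x ys))"

(* Paid exchange: swap the items at positions j and j+1 (no-op if out of range,
   but it is still charged cost 1). *)
definition swap_adj :: "nat \<Rightarrow> 'a list \<Rightarrow> 'a list" where
  "swap_adj j xs = (if Suc j < length xs then xs[j := xs ! Suc j, Suc j := xs ! j] else xs)"

(* Free exchange: move the accessed item x to position min k (its current position),
   i.e. only closer to the front. *)
definition move_to :: "nat \<Rightarrow> 'a \<Rightarrow> 'a list \<Rightarrow> 'a list" where
  "move_to k x xs = (let k' = min k (index_of x xs); ys = remove1 x xs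
                     in take k' ys @ x # drop k' ys)"

(* A policy maps the requests seen so far (including the current one) to an action:
   a list of paid exchanges performed before the access, and the target position of
   the free exchange performed right after the access.
   run P h rs L = total cost of serving the remaining requests rs from list L,
   where h is the history of already served requests. *)
fun run :: "('a list \<Rightarrow> nat list \<times> nat) \<Rightarrow> 'a list \<Rightarrow> 'a list \<Rightarrow> 'a list \<Rightarrow> nat" where
  "run P h [] L = 0"
| "run P h (x # rs) L =
     (let (sw, k) = P (h @ [x]);
          L1 = fold swap_adj sw L;
          c = length sw + index_of x L1 + 1;
          L2 = move_to k x L1
      in c + run P (h @ [x]) rs L2)"

definition alg_cost :: "((nat \<Rightarrow> bool) \<Rightarrow> 'a list \<Rightarrow> nat list \<times> nat) \<Rightarrow> (nat \<Rightarrow> bool)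
    \<Rightarrow> 'a list \<Rightarrow> 'a list \<Rightarrow> nat" where
  "alg_cost A \<phi> L \<sigma> = run (A \<phi>) [] \<sigma> L"

definition OPT :: "'a list \<Rightarrow> 'a list \<Rightarrow> nat" where
  "OPT L \<sigma> = (LEAST c. \<exists>P. run P [] \<sigma> L = c)"

(* The first b advice bits determine the behaviour of A on \<sigma>: every tape agreeing
   with \<phi> on bits 0..b-1 yields exactly the same actions on every prefix of \<sigma>.
   Any b such that all accessed bits lie in the first b bits has this property. *)
definition advice_determines :: "((nat \<Rightarrow> bool) \<Rightarrow> 'a list \<Rightarrow> nat list \<times> nat)
    \<Rightarrow> (nat \<Rightarrow> bool) \<Rightarrow> 'a list \<Rightarrow> nat \<Rightarrow> bool" where
  "advice_determines A \<phi> \<sigma> b \<longleftrightarrow>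
     (\<forall>\<psi>. (\<forall>i<b. \<psi> i = \<phi> i) \<longrightarrow>
        (\<forall>i<length \<sigma>. A \<psi> (take (Suc i) \<sigma>) = A \<phi> (take (Suc i) \<sigma>)))"

end

theory Submission
  imports Defs
begin


lemma swap2: "swap_adj j [x,y] = (if j = 0 then [y,x] else [x,y])"
  by (auto simp: swap_adj_def)

lemma fold_swap2: "fold swap_adj sw [x,y] \<in> {[x,y],[y,x]}"
proof (induction sw arbitrary: x y)
  case Nil then show ?case by simp
next
  case (Cons j sw) then show ?case by (auto simp: swap2)
qed

lemma move_front: "move_to k x (x#ys) = x#ys"
  by (simp add: move_to_def)

lemma move_back: "x \<noteq> y \<Longrightarrow> move_to k y [x,y] = (if k = 0 then [y,x] else [x,y])"
  by (simp add: move_to_def)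

fun stL :: "('a list \<Rightarrow> nat list \<times> nat) \<Rightarrow> 'a list \<Rightarrow> 'a list \<Rightarrow> 'a list \<Rightarrow> 'a list" where
  "stL P h [] L = L"
| "stL P h (x # rs) L =
     (let (sw, k) = P (h @ [x]);
          L1 = fold swap_adj sw L;
          L2 = move_to k x L1
      in stL P (h @ [x]) rs L2)"

lemma run_append: "run P h (xs @ ys) L = run P h xs L + run P (h @ xs) ys (stL P h xs L)"
  by (induction xs arbitrary: h L) (auto simp: Let_def split: prod.splits)

lemma stL_append: "stL P h (xs @ ys) L = stL P (h @ xs) ys (stL P h xs L)"
  by (induction xs arbitrary: h L) (auto simp: Let_def split: prod.splits)

definition cst :: "'a list \<Rightarrow> 'a \<Rightarrow> 'a list \<Rightarrow> nat" where
  "cst L r L2 = (if hd L = r then (if L2 = L then 1 else 3) else 2)"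

lemma step:
  assumes "a \<noteq> b" "L \<in> {[a,b],[b,a]}" "r \<in> {a,b}"
  shows "stL P h [r] L \<in> {[a,b],[b,a]} \<and> run P h [r] L \<ge> cst L r (stL P h [r] L)"
proof -
  obtain sw k where P: "P (h @ [r]) = (sw, k)" by fastforce
  obtain x y where L: "L = [x,y]" and xy: "{x,y} = {a,b}" "x \<noteq> y" using assms by auto
  define L1 where "L1 = fold swap_adj sw L"
  have L1: "L1 \<in> {[x,y],[y,x]}" using fold_swap2 L L1_def by metis
  have sw: "L1 \<noteq> L \<Longrightarrow> length sw \<ge> 1" using L1_def by (cases sw) auto
  have st: "stL P h [r] L = move_to k r L1" by (simp add: P L1_def)
  have rn: "run P h [r] L = length sw + index_of r L1 + 1" by (simp add: P L1_def)
  have r: "r = x \<or> r = y" using xy assms(3) by auto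
  have LL: "L \<in> {[a,b],[b,a]}" by fact
  show ?thesis
    unfolding st rn
  proof -
    from L1 r show "move_to k r L1 \<in> {[a, b], [b, a]} \<and> cst L r (move_to k r L1) \<le> length sw + index_of r L1 + 1"
    proof (elim insertE disjE)
      assume "L1 = [x,y]" "r = x" then show ?thesis using xy LL L by (auto simp: move_front cst_def)
    next
      assume "L1 = [y,x]" "r = x" then show ?thesis using xy LL L sw by (auto simp: move_back cst_def)
    next
      assume "L1 = [x,y]" "r = y" then show ?thesis using xy LL L by (auto simp: move_back cst_def)
    next
      assume "L1 = [y,x]" "r = y" then show ?thesis using xy LL L sw by (auto simp: move_front cst_def)
    qed auto
  qed
qed

definition blk :: "'a \<Rightarrow> 'a \<Rightarrow> bool \<Rightarrow> 'a list" where
  "blk a b \<beta> = (if \<beta> then [a,b,b,b,a] else [a,b,a,a,b])"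

lemma blk_split: "blk a b \<beta> = [a] @ [b] @ [if \<beta> then b else a] @ [if \<beta> then b else a] @ [if \<beta> then a else b]"
  by (simp add: blk_def)

lemma block_lb:
  assumes ab: "a \<noteq> b" and L: "L \<in> {[a,b],[b,a]}"
  shows "stL P h (blk a b \<beta>) L \<in> {[a,b],[b,a]} \<and>
     run P h (blk a b \<beta>) L \<ge> 7 + (if (stL P h [a,b] L = [b,a]) \<noteq> \<beta> then 1 else 0)"
proof -
  define r3 where "r3 = (if \<beta> then b else a)"
  define r5 where "r5 = (if \<beta> then a else b)"
  have r3: "r3 \<in> {a,b}" and r5: "r5 \<in> {a,b}" by (auto simp: r3_def r5_def)
  have bl: "blk a b \<beta> = [a] @ [b] @ [r3] @ [r3] @ [r5]" by (simp add: blk_def r3_def r5_def)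
  define h1 where "h1 = h @ [a]"
  define h2 where "h2 = h1 @ [b]"
  define h3 where "h3 = h2 @ [r3]"
  define h4 where "h4 = h3 @ [r3]"
  define L1 where "L1 = stL P h [a] L"
  define L2 where "L2 = stL P h1 [b] L1"
  define L3 where "L3 = stL P h2 [r3] L2"
  define L4 where "L4 = stL P h3 [r3] L3"
  define L5 where "L5 = stL P h4 [r5] L4"
  have s1: "L1 \<in> {[a,b],[b,a]} \<and> run P h [a] L \<ge> cst L a L1"
    unfolding L1_def by (rule step[OF ab L]) simp
  have s2: "L2 \<in> {[a,b],[b,a]} \<and> run P h1 [b] L1 \<ge> cst L1 b L2"
    unfolding L2_def by (rule step[OF ab]) (use s1 in auto)
  have s3: "L3 \<in> {[a,b],[b,a]} \<and> run P h2 [r3] L2 \<ge> cst L2 r3 L3"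
    unfolding L3_def by (rule step[OF ab]) (use s2 r3 in auto)
  have s4: "L4 \<in> {[a,b],[b,a]} \<and> run P h3 [r3] L3 \<ge> cst L3 r3 L4"
    unfolding L4_def by (rule step[OF ab]) (use s3 r3 in auto)
  have s5: "L5 \<in> {[a,b],[b,a]} \<and> run P h4 [r5] L4 \<ge> cst L4 r5 L5"
    unfolding L5_def by (rule step[OF ab]) (use s4 r5 in auto)
  have stb: "stL P h (blk a b \<beta>) L = L5"
    unfolding bl stL_append L5_def L4_def L3_def L2_def L1_def h4_def h3_def h2_def h1_def by simp
  have rnb: "run P h (blk a b \<beta>) L = run P h [a] L + run P h1 [b] L1 + run P h2 [r3] L2
      + run P h3 [r3] L3 + run P h4 [r5] L4"
    unfolding bl run_append stL_append L4_def L3_def L2_def L1_def h4_def h3_def h2_def h1_def by simp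
  have g: "stL P h [a,b] L = L2"
    using stL_append[of P h "[a]" "[b]" L] by (simp add: L2_def L1_def h1_def)
  show ?thesis unfolding stb rnb g
    using s1 s2 s3 s4 s5 L ab
    by (cases \<beta>; simp add: r3_def r5_def; elim insertE; simp add: cst_def; fastforce)
qed


fun errl :: "'a \<Rightarrow> 'a \<Rightarrow> ('a list \<Rightarrow> nat list \<times> nat) \<Rightarrow> 'a list \<Rightarrow> 'a list \<Rightarrow> bool list \<Rightarrow> bool list" where
  "errl a b P h L [] = []"
| "errl a b P h L (\<beta> # bs) = ((stL P h [a,b] L = [b,a]) \<noteq> \<beta>) # errl a b P (h @ blk a b \<beta>) (stL P h (blk a b \<beta>) L) bs"

definition sig :: "'a \<Rightarrow> 'a \<Rightarrow> bool list \<Rightarrow> 'a list" where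
  "sig a b bs = concat (map (blk a b) bs)"

lemma sig_Cons: "sig a b (\<beta> # bs) = blk a b \<beta> @ sig a b bs"
  by (simp add: sig_def)

lemma length_sig: "length (sig a b bs) = 5 * length bs"
  by (induction bs) (auto simp: sig_def blk_def)

lemma set_sig: "set (sig a b bs) \<subseteq> {a,b}"
  by (auto simp: sig_def blk_def split: if_splits)

lemma length_errl: "length (errl a b P h L bs) = length bs"
  by (induction bs arbitrary: h L) auto

lemma alg_lb:
  assumes ab: "a \<noteq> b" and L: "L \<in> {[a,b],[b,a]}"
  shows "run P h (sig a b bs) L \<ge> 7 * length bs + length (filter id (errl a b P h L bs))"
  using L
proof (induction bs arbitrary: h L)
  case Nil then show ?case by (simp add: sig_def)
next
  case (Cons \<beta> bs)
  have B: "stL P h (blk a b \<beta>) L \<in> {[a,b],[b,a]} \<and>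
     run P h (blk a b \<beta>) L \<ge> 7 + (if (stL P h [a,b] L = [b,a]) \<noteq> \<beta> then 1 else 0)"
    by (rule block_lb[OF ab Cons.prems])
  have IH: "run P (h @ blk a b \<beta>) (sig a b bs) (stL P h (blk a b \<beta>) L) \<ge> 7 * length bs +
     length (filter id (errl a b P (h @ blk a b \<beta>) (stL P h (blk a b \<beta>) L) bs))"
    using Cons.IH B by blast
  define c :: nat where "c = (if (stL P h [a,b] L = [b,a]) \<noteq> \<beta> then 1 else 0)"
  have e: "length (filter id (errl a b P h L (\<beta>#bs))) = c + length (filter id (errl a b P (h @ blk a b \<beta>) (stL P h (blk a b \<beta>) L) bs))"
    unfolding c_def by (simp only: errl.simps) simp
  have B2: "run P h (blk a b \<beta>) L \<ge> 7 + c" using B unfolding c_def by blast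
  have l: "7 * length (\<beta>#bs) = 7 + 7 * length bs" by simp
  show ?case unfolding sig_Cons run_append e l using B2 IH by linarith
qed

lemma errl_inj:
  assumes "errl a b P h L bs = errl a b P h L cs" "length bs = length cs"
  shows "bs = cs"
  using assms
proof (induction bs arbitrary: cs h L)
  case Nil then show ?case by simp
next
  case (Cons \<beta> bs)
  then obtain \<gamma> cs' where cs: "cs = \<gamma> # cs'" by (cases cs) auto
  from Cons.prems have "\<beta> = \<gamma>" unfolding cs by auto
  with Cons.prems Cons.IH show ?case unfolding cs by auto
qed

lemma run_cong:
  assumes "\<forall>i<length rs. P (h @ take (Suc i) rs) = Q (h @ take (Suc i) rs)"
  shows "run P h rs L = run Q h rs L"
  using assms
proof (induction rs arbitrary: h L)
  case Nil then show ?case by simp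
next
  case (Cons x rs)
  have 0: "P (h @ [x]) = Q (h @ [x])" using Cons.prems[rule_format, of 0] by simp
  have "\<forall>i<length rs. P ((h @ [x]) @ take (Suc i) rs) = Q ((h @ [x]) @ take (Suc i) rs)"
  proof (intro allI impI)
    fix i assume "i < length rs"
    then show "P ((h @ [x]) @ take (Suc i) rs) = Q ((h @ [x]) @ take (Suc i) rs)"
      using Cons.prems[rule_format, of "Suc i"] by simp
  qed
  with Cons.IH show ?case by (simp add: 0 split: prod.splits)
qed

lemma opt_run:
  assumes ab: "a \<noteq> b"
    and P: "\<forall>i<length (sig a b bs). P (h @ take (Suc i) (sig a b bs)) = ([], if bs ! (i div 5) then 0 else 1)"
  shows "run P h (sig a b bs) [a,b] = 7 * length bs"
  using P
proof (induction bs arbitrary: h)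
  case Nil then show ?case by (simp add: sig_def)
next
  case (Cons \<beta> bs)
  have lb: "length (blk a b \<beta>) = 5" by (simp add: blk_def)
  have pre: "P (h @ take (Suc i) (blk a b \<beta>)) = ([], if \<beta> then 0 else 1)" if "i < 5" for i
    using Cons.prems[rule_format, of i] that lb by (simp add: sig_Cons length_sig)
  have p1: "P (h @ [a]) = ([], if \<beta> then 0 else 1)" using pre[of 0] by (cases \<beta>) (simp_all add: blk_def)
  have p2: "P (h @ [a,b]) = ([], if \<beta> then 0 else 1)" using pre[of 1] by (cases \<beta>) (simp_all add: blk_def)
  have p3: "P (h @ [a,b,if \<beta> then b else a]) = ([], if \<beta> then 0 else 1)" using pre[of 2] by (cases \<beta>) (simp_all add: blk_def)
  have p4: "P (h @ [a,b,if \<beta> then b else a,if \<beta> then b else a]) = ([], if \<beta> then 0 else 1)" using pre[of 3] by (cases \<beta>) (simp_all add: blk_def)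
  have p5: "P (h @ blk a b \<beta>) = ([], if \<beta> then 0 else 1)" using pre[of 4] lb by simp
  have blkr: "run P h (blk a b \<beta>) [a,b] = 7 \<and> stL P h (blk a b \<beta>) [a,b] = [a,b]"
  proof (cases \<beta>)
    case True then show ?thesis using p1 p2 p3 p4 p5 ab by (simp add: blk_def move_front move_back)
  next
    case False then show ?thesis using p1 p2 p3 p4 p5 ab by (simp add: blk_def move_front move_back)
  qed
  have "\<forall>i<length (sig a b bs). P ((h @ blk a b \<beta>) @ take (Suc i) (sig a b bs)) = ([], if bs ! (i div 5) then 0 else 1)"
  proof (intro allI impI)
    fix i assume i: "i < length (sig a b bs)"
    have t: "take (Suc (i+5)) (blk a b \<beta> @ sig a b bs) = blk a b \<beta> @ take (Suc i) (sig a b bs)" using lb by simp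
    have "i+5 < length (sig a b (\<beta>#bs))" using i lb by (simp add: sig_Cons)
    then have "P (h @ take (Suc (i+5)) (sig a b (\<beta>#bs))) = ([], if (\<beta>#bs) ! ((i+5) div 5) then 0 else 1)"
      using Cons.prems by blast
    moreover have "(\<beta>#bs) ! ((i+5) div 5) = bs ! (i div 5)" by simp
    ultimately show "P ((h @ blk a b \<beta>) @ take (Suc i) (sig a b bs)) = ([], if bs ! (i div 5) then 0 else 1)"
      unfolding sig_Cons t by simp
  qed
  with Cons.IH have "run P (h @ blk a b \<beta>) (sig a b bs) [a,b] = 7 * length bs" by blast
  then show ?case unfolding sig_Cons run_append using blkr by simp
qed

lemma OPT_sig:
  assumes ab: "a \<noteq> b"
  shows "OPT [a,b] (sig a b bs) \<le> 7 * length bs"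
proof -
  define P :: "'a list \<Rightarrow> nat list \<times> nat" where "P = (\<lambda>h. ([], if bs ! ((length h - 1) div 5) then 0 else 1))"
  have "run P [] (sig a b bs) [a,b] = 7 * length bs"
    by (rule opt_run[OF ab]) (simp add: P_def)
  then show ?thesis unfolding OPT_def by (metis (mono_tags, lifting) Least_le)
qed



lemma ent_term:
  fixes x :: real and m j :: nat
  assumes x0: "0 < x" and x1: "x \<le> 1/2" and j: "real j \<le> x * m" and jm: "j \<le> m"
  shows "x powr (x*m) * (1-x) powr ((1-x)*m) \<le> x^j * (1-x)^(m-j)"
proof -
  have y0: "0 < 1 - x" using x1 by simp
  have lnx: "ln x \<le> ln (1-x)" using x0 x1 by simp
  have "x^j * (1-x)^(m-j) = exp (real j * ln x + real (m-j) * ln (1-x))"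
  proof -
    have e1: "x^j = exp (real j * ln x)" using powr_realpow[OF x0, of j] x0 by (simp add: powr_def)
    have e2: "(1-x)^(m-j) = exp (real (m-j) * ln (1-x))" using powr_realpow[OF y0, of "m-j"] y0 by (simp add: powr_def)
    show ?thesis by (simp add: e1 e2 exp_add)
  qed
  moreover have "x powr (x*m) * (1-x) powr ((1-x)*m) = exp (x*m * ln x + (1-x)*m * ln (1-x))"
    using x0 y0 by (simp add: powr_def exp_add)
  moreover have "x*m * ln x + (1-x)*m * ln (1-x) \<le> real j * ln x + real (m-j) * ln (1-x)"
  proof -
    have "(x*m - real j) * (ln x - ln (1-x)) \<le> 0"
      using j lnx by (intro mult_nonneg_nonpos) auto
    moreover have "real (m-j) = real m - real j" using jm by simp
    ultimately show ?thesis by (simp add: algebra_simps)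
  qed
  ultimately show ?thesis by simp
qed

lemma ent_sum:
  fixes x :: real and m k :: nat
  assumes x0: "0 < x" and x1: "x \<le> 1/2" and k: "real k \<le> x * m"
  shows "(\<Sum>j\<le>k. real (m choose j)) * (x powr (x*m) * (1-x) powr ((1-x)*m)) \<le> 1"
proof -
  have km: "k \<le> m"
  proof -
    have "x * m \<le> m" using mult_left_le_one_le[of "real m" x] x0 x1 by simp
    then show ?thesis using k by linarith
  qed
  have "(\<Sum>j\<le>k. real (m choose j)) * (x powr (x*m) * (1-x) powr ((1-x)*m))
      = (\<Sum>j\<le>k. real (m choose j) * (x powr (x*m) * (1-x) powr ((1-x)*m)))"
    by (simp add: sum_distrib_right)
  also have "\<dots> \<le> (\<Sum>j\<le>k. real (m choose j) * (x^j * (1-x)^(m-j)))"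
  proof (rule sum_mono)
    fix j assume "j \<in> {..k}"
    then have "j \<le> k" by simp
    then show "real (m choose j) * (x powr (x*m) * (1-x) powr ((1-x)*m)) \<le> real (m choose j) * (x^j * (1-x)^(m-j))"
      using ent_term[OF x0 x1, of j] k km by (intro mult_left_mono) auto
  qed
  also have "\<dots> \<le> (\<Sum>j\<le>m. real (m choose j) * (x^j * (1-x)^(m-j)))"
    using km x0 x1 by (intro sum_mono2) auto
  also have "\<dots> = (x + (1-x))^m"
    unfolding binomial_ring[of x "1-x" m] by (simp add: mult.assoc)
  also have "\<dots> = 1" by simp
  finally show ?thesis .
qed



lemma count_main:
  fixes S :: "bool list \<Rightarrow> bool list set" and V B0 m :: nat
  assumes cS: "\<And>w. length w = B0 \<Longrightarrow> card (S w) \<le> V"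
    and cov: "\<And>bs. length bs = m \<Longrightarrow> \<exists>w. length w = B0 \<and> bs \<in> S w"
    and sub: "\<And>w. S w \<subseteq> {bs. length bs = m}"
  shows "2^m \<le> 2^B0 * V"
proof -
  define W where "W = {w :: bool list. set w \<subseteq> UNIV \<and> length w = B0}"
  define Bs where "Bs = {bs :: bool list. set bs \<subseteq> UNIV \<and> length bs = m}"
  have fW: "finite W" unfolding W_def by (rule finite_lists_length_eq) simp
  have fB: "finite Bs" unfolding Bs_def by (rule finite_lists_length_eq) simp
  have cW: "card W = 2^B0" unfolding W_def using card_lists_length_eq[of "UNIV::bool set" B0] by simp
  have cB: "card Bs = 2^m" unfolding Bs_def using card_lists_length_eq[of "UNIV::bool set" m] by simp
  have "Bs \<subseteq> (\<Union>w\<in>W. S w)" using cov unfolding Bs_def W_def by blast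
  moreover have "(\<Union>w\<in>W. S w) \<subseteq> Bs" using sub unfolding Bs_def by blast
  ultimately have "card Bs \<le> card (\<Union>w\<in>W. S w)" using fB by (intro card_mono) (auto intro: finite_subset)
  also have "\<dots> \<le> (\<Sum>w\<in>W. card (S w))" by (rule card_UN_le[OF fW])
  also have "\<dots> \<le> (\<Sum>w\<in>W. V)" using cS unfolding W_def by (intro sum_mono) auto
  also have "\<dots> = 2^B0 * V" using cW by simp
  finally show ?thesis using cB by simp
qed

lemma count_sets:
  "card {E. E \<subseteq> {..<m} \<and> card E \<le> k} \<le> (\<Sum>j\<le>k. m choose j)"
proof -
  have "{E. E \<subseteq> {..<m} \<and> card E \<le> k} = (\<Union>j\<in>{..k}. {E. E \<subseteq> {..<m} \<and> card E = j})" by auto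
  then have "card {E. E \<subseteq> {..<m} \<and> card E \<le> k} \<le> (\<Sum>j\<le>k. card {E. E \<subseteq> {..<m} \<and> card E = j})"
    using card_UN_le[of "{..k}" "\<lambda>j. {E. E \<subseteq> {..<m} \<and> card E = j}"] by simp
  also have "\<dots> = (\<Sum>j\<le>k. m choose j)" by (simp add: n_subsets)
  finally show ?thesis .
qed

lemma card_S:
  fixes P :: "'a list \<Rightarrow> nat list \<times> nat"
  shows "card {bs. length bs = m \<and> length (filter id (errl a b P h L bs)) \<le> k} \<le> (\<Sum>j\<le>k. m choose j)"
proof -
  define f where "f bs = {i. i < m \<and> errl a b P h L bs ! i}" for bs
  let ?S = "{bs. length bs = m \<and> length (filter id (errl a b P h L bs)) \<le> k}"
  have "inj_on f ?S"
  proof (rule inj_onI)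
    fix bs cs assume bs: "bs \<in> ?S" and cs: "cs \<in> ?S" and e: "f bs = f cs"
    have "errl a b P h L bs = errl a b P h L cs"
    proof (rule nth_equalityI)
      show "length (errl a b P h L bs) = length (errl a b P h L cs)" using bs cs by (simp add: length_errl)
      fix i assume "i < length (errl a b P h L bs)"
      then have i: "i < m" using bs by (simp add: length_errl)
      have "i \<in> f bs \<longleftrightarrow> i \<in> f cs" using e by simp
      then show "errl a b P h L bs ! i = errl a b P h L cs ! i" using i unfolding f_def by auto
    qed
    then show "bs = cs" using errl_inj bs cs by auto
  qed
  moreover have "f ` ?S \<subseteq> {E. E \<subseteq> {..<m} \<and> card E \<le> k}"
  proof
    fix E assume "E \<in> f ` ?S"
    then obtain bs where bs: "bs \<in> ?S" and E: "E = f bs" by blast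
    have "card E = length (filter id (errl a b P h L bs))"
      unfolding E f_def length_filter_conv_card using bs by (simp add: length_errl)
    then show "E \<in> {E. E \<subseteq> {..<m} \<and> card E \<le> k}" using bs E f_def by auto
  qed
  moreover have "finite {E. E \<subseteq> {..<m} \<and> card E \<le> k}" by simp
  ultimately have "card ?S \<le> card {E. E \<subseteq> {..<m} \<and> card E \<le> k}" by (rule card_inj_on_le)
  also have "\<dots> \<le> (\<Sum>j\<le>k. m choose j)" by (rule count_sets)
  finally show ?thesis .
qed



theorem theorem2:
  fixes \<gamma> :: real and L :: "'a list"
    and A :: "(nat \<Rightarrow> bool) \<Rightarrow> 'a list \<Rightarrow> nat list \<times> nat"
    and adv :: "'a list \<Rightarrow> nat \<Rightarrow> bool" and n :: nat
  assumes "1 < \<gamma>" and "\<gamma> \<le> 15/14"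
    and "distinct L" and "length L = 2"
    and "\<forall>\<sigma>. set \<sigma> \<subseteq> set L \<longrightarrow> real (alg_cost A (adv \<sigma>) L \<sigma>) \<le> \<gamma> * real (OPT L \<sigma>)"
    and "5 dvd n"
  shows "\<exists>\<sigma>. length \<sigma> = n \<and> set \<sigma> \<subseteq> set L \<and>
           (\<forall>b. advice_determines A (adv \<sigma>) \<sigma> b \<longrightarrow>
              real b \<ge> real n / 5 * (1 + (7*\<gamma> - 7) * log 2 (7*\<gamma> - 7)
                                        + (8 - 7*\<gamma>) * log 2 (8 - 7*\<gamma>)))"
proof (rule ccontr)
  assume H0: "\<not> ?thesis"
  obtain a b where L: "L = [a,b]" using assms(4)
    by (metis (no_types, lifting) One_nat_def Suc_1 length_0_conv length_Suc_conv)
  have ab: "a \<noteq> b" using assms(3) L by simp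
  obtain m where n: "n = 5 * m" using assms(6) by blast
  define x where "x = 7*\<gamma> - 7"
  have x0: "0 < x" and x1: "x \<le> 1/2" using assms(1,2) unfolding x_def by auto
  have x8: "8 - 7*\<gamma> = 1 - x" unfolding x_def by simp
  define bound where "bound = real n / 5 * (1 + x * log 2 x + (1-x) * log 2 (1-x))"
  have H: "\<exists>bb. advice_determines A (adv \<sigma>) \<sigma> bb \<and> real bb < bound"
    if "length \<sigma> = n" "set \<sigma> \<subseteq> set L" for \<sigma>
    using H0 that unfolding bound_def x8 x_def[symmetric] by (auto simp: not_le)
  have bpos: "0 < bound"
  proof -
    have "length (sig a b (replicate m False)) = n" "set (sig a b (replicate m False)) \<subseteq> set L"
      using n L set_sig[of a b] by (simp_all add: length_sig)
    then obtain bb where "real bb < bound" using H by blast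
    then show ?thesis by linarith
  qed
  define B0 where "B0 = nat \<lceil>bound\<rceil> - 1"
  have B0lt: "real B0 < bound" unfolding B0_def using bpos by linarith
  have B0ge: "bb \<le> B0" if "real bb < bound" for bb
    unfolding B0_def using that bpos by linarith
  define k where "k = nat \<lfloor>x * m\<rfloor>"
  have k: "real k \<le> x * m" unfolding k_def using x0 by simp
  define phi :: "bool list \<Rightarrow> nat \<Rightarrow> bool" where "phi w = (\<lambda>i. if i < length w then w ! i else False)" for w
  define S where "S w = {bs. length bs = m \<and> length (filter id (errl a b (A (phi w)) [] [a,b] bs)) \<le> k}" for w
  define V where "V = (\<Sum>j\<le>k. m choose j)"
  have main: "2^m \<le> 2^B0 * V"
  proof (rule count_main[of B0 S V m])
    fix w :: "bool list" show "card (S w) \<le> V" unfolding S_def V_def by (rule card_S)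
  next
    fix w show "S w \<subseteq> {bs. length bs = m}" unfolding S_def by auto
  next
    fix bs :: "bool list" assume bs: "length bs = m"
    define \<sigma> where "\<sigma> = sig a b bs"
    have ls: "length \<sigma> = n" and ss: "set \<sigma> \<subseteq> set L"
      using bs n L set_sig[of a b bs] by (simp_all add: \<sigma>_def length_sig)
    obtain bb where det: "advice_determines A (adv \<sigma>) \<sigma> bb" and bb: "real bb < bound"
      using H[OF ls ss] by blast
    define w where "w = map (adv \<sigma>) [0..<B0]"
    have lw: "length w = B0" unfolding w_def by simp
    have bbB: "bb \<le> B0" by (rule B0ge[OF bb])
    have agree: "\<forall>i<bb. phi w i = adv \<sigma> i"
    proof (intro allI impI)
      fix i assume "i < bb"
      then have "i < B0" using bbB by linarith
      then show "phi w i = adv \<sigma> i" unfolding phi_def w_def by simp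
    qed
    have eqA0: "\<forall>i<length \<sigma>. A (phi w) (take (Suc i) \<sigma>) = A (adv \<sigma>) (take (Suc i) \<sigma>)"
      using det agree unfolding advice_determines_def by blast
    then have eqA: "\<forall>i<length \<sigma>. A (phi w) ([] @ take (Suc i) \<sigma>) = A (adv \<sigma>) ([] @ take (Suc i) \<sigma>)"
      by simp
    have ac: "alg_cost A (adv \<sigma>) L \<sigma> = run (A (phi w)) [] \<sigma> [a,b]"
      unfolding alg_cost_def L using run_cong[OF eqA] by simp
    have lb: "run (A (phi w)) [] \<sigma> [a,b] \<ge> 7 * m + length (filter id (errl a b (A (phi w)) [] [a,b] bs))"
      using alg_lb[OF ab, where P="A (phi w)" and h="[]" and L="[a,b]" and bs=bs] bs unfolding \<sigma>_def by simp
    have opt: "OPT L \<sigma> \<le> 7 * m" unfolding L \<sigma>_def using OPT_sig[OF ab, of bs] bs by simp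
    define e where "e = length (filter id (errl a b (A (phi w)) [] [a,b] bs))"
    have "real (7 * m + e) \<le> \<gamma> * real (OPT L \<sigma>)"
      using assms(5) ss ac lb unfolding e_def
      by (metis (no_types, lifting) of_nat_le_iff order_trans)
    also have "\<dots> \<le> \<gamma> * (7 * m)" using opt assms(1) by (intro mult_left_mono) auto
    finally have "real e \<le> x * m" unfolding x_def by (simp add: algebra_simps)
    then have "e \<le> k" unfolding k_def by (rule le_nat_floor)
    then have "bs \<in> S w" unfolding S_def e_def using bs by simp
    then show "\<exists>w. length w = B0 \<and> bs \<in> S w" using lw by blast
  qed
  define Q where "Q = x powr (x*m) * (1-x) powr ((1-x)*m)"
  have Q0: "0 < Q" unfolding Q_def using x0 x1 by simp
  have VQ: "real V * Q \<le> 1" unfolding V_def Q_def using ent_sum[OF x0 x1 k] by simp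
  have "(2::real)^m * Q \<le> 2^B0 * real V * Q"
  proof -
    have "real (2^m) \<le> real (2^B0 * V)" using main by (simp only: of_nat_le_iff)
    then have "(2::real)^m \<le> 2^B0 * real V" by simp
    then show ?thesis using Q0 by (intro mult_right_mono) simp_all
  qed
  also have "\<dots> \<le> 2^B0" using VQ by (simp add: mult.assoc mult_left_le)
  finally have le: "(2::real)^m * Q \<le> 2^B0" .
  have "log 2 ((2::real)^m * Q) = bound"
  proof -
    have "log 2 ((2::real)^m * Q) = log 2 (2^m) + log 2 Q" using Q0 by (simp add: log_mult)
    also have "log 2 ((2::real)^m) = m" by (simp add: log_nat_power)
    also have "log 2 Q = x*m * log 2 x + (1-x)*m * log 2 (1-x)"
      unfolding Q_def using x0 x1 by (simp add: log_mult log_powr)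
    finally show ?thesis unfolding bound_def n by (simp add: algebra_simps)
  qed
  moreover have "log 2 ((2::real)^m * Q) \<le> log 2 (2^B0)"
    using le Q0 log_le_cancel_iff[of 2 "2^m*Q" "2^B0"] by simp
  moreover have "log 2 ((2::real)^B0) = B0" by (simp add: log_nat_power)
  ultimately show False using B0lt by linarith
qed

end
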